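(* Suppose Assumption 1 holds, $f$ is convex, $F$ is $\mu$-optimal-set-strongly convex for some $\mu>0$, every $d^k$ computed in Algorithm 2 satisfies the $\eta$-inexactness condition for a fixed $\eta\in[0,1)$, and for all $k$ the initial matrices satisfy $m_0I\preceq H^0_k\preceq M_0I$ with $M_0>0$, $m_0\le M_0$ (and $m_0>0$ for Variant 1). Then for all $k=0,1,2,\dots$, with $H_k$ the final (accepted) matrix, $$\frac{F(x^{k+1})-F^*}{F(x^k)-F^*}\le1-\gamma\frac{\mu(1-\eta)}{\mu+\|H_k\|},$$ and the right-hand side is at most $1-\gamma\frac{\mu(1-\eta)}{\mu+\tilde M_1(\eta)}$ for Variant 1 and at most $1-\gamma\frac{\mu(1-\eta)}{\mu+\tilde M_2(\eta)}$ for Variant 2. Moreover, for every $k$ with $F(x^k)-F^*\ge(x^k-P_\Omega(x^k))^TH_k(x^k-P_\Omega(x^k))$ (and the final $H_k\succeq0$), one has $\frac{F(x^{k+1})-F^*}{F(x^k)-F^*}\le1-\frac{(1-\eta)\gamma}{2}$.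
   Context: Problem setting: $F(x)=f(x)+\psi(x)$ on $\mathbb{R}^n$, $F^*=\inf F$, $\Omega=\{x:F(x)=F^*\}$, $P_\Omega$ the Euclidean projection onto $\Omega$, $\|\cdot\|$ the Euclidean / spectral norm. Assumption 1: $f$ is differentiable with $L$-Lipschitz continuous gradient ($L>0$); $\psi:\mathbb{R}^n\to\mathbb{R}\cup\{+\infty\}$ is convex, proper and closed; $F$ is bounded below; $\Omega$ is nonempty. $F$ is $\mu$-optimal-set-strongly convex ($\mu\ge0$) if for all $x$ and all $\lambda\in[0,1]$: $F(\lambda x+(1-\lambda)P_\Omega(x))\le\lambda F(x)+(1-\lambda)F^*-\frac{\mu\lambda(1-\lambda)}2\|x-P_\Omega(x)\|^2$. For $x\in\mathbb{R}^n$ and symmetric $H$, $Q^x_H(d)\coloneqq\nabla f(x)^Td+\frac12d^THd+\psi(x+d)-\psi(x)$, $Q^*=\inf_dQ^x_H(d)$; $d$ satisfies the $\eta$-inexactness condition if $Q^x_H(d)\le(1-\eta)Q^*$. Algorithm 2: given $\beta\in(0,1)$, $\gamma\in(0,1]$, $x^0$, fixed $\eta\in[0,1)$; for each $k$: choose symmetric $H^0_k$ (in Variant 1, $H^0_k\succ0$); set $\alpha_k\leftarrow1$, $H_k\leftarrow H^0_k$, compute $d^k$ satisfying the $\eta$-inexactness condition for $Q^{x^k}_{H_k}$; while $F(x^k)-F(x^k+d^k)\ge-\gamma Q^{x^k}_{H_k}(d^k)\ge0$ fails: Variant 1 sets $\alpha_k\leftarrow\beta\alpha_k$, $H_k\leftarrow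 H^0_k/\alpha_k$; Variant 2 sets $H_k\leftarrow H^0_k+\alpha_k^{-1}I$, then $\alpha_k\leftarrow\beta\alpha_k$; then $d^k$ is recomputed satisfying the $\eta$-inexactness condition. Finally $x^{k+1}=x^k+d^k$; "final $H_k$" is the accepted matrix. Constants: $\tilde M_2(\eta)\coloneqq M_0+\max\{1,\frac1\beta(\frac{L(1+\sqrt\eta)}{2-\gamma(1-\sqrt\eta)}-m_0)\}$, $\tilde M_1(\eta)\coloneqq M_0\max\{1,\frac{L(1+\sqrt\eta)}{\beta(2-\gamma(1-\sqrt\eta))m_0}\}$. *)

theory Defs
  imports "HOL-Analysis.Analysis"
begin

definition symmetric_mat :: "real^'n^'n \<Rightarrow> bool" where
  "symmetric_mat A \<longleftrightarrow> transpose A = A"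

definition loewner_le :: "real^'n^'n \<Rightarrow> real^'n^'n \<Rightarrow> bool" where
  "loewner_le A B \<longleftrightarrow> (\<forall>v. v \<bullet> (A *v v) \<le> v \<bullet> (B *v v))"

definition spec_norm :: "real^'n^'n \<Rightarrow> real" where
  "spec_norm A = onorm (\<lambda>v. A *v v)"

text \<open>The extended-valued psi is represented by its effective domain D and its
  (real) values on D; psi = +infinity outside D.  Convex, proper and closed:\<close>

definition convex_proper_closed :: "(real^'n) set \<Rightarrow> (real^'n \<Rightarrow> real) \<Rightarrow> bool" where
  "convex_proper_closed D psi \<longleftrightarrow>
     D \<noteq> {} \<and> convex D \<and> convex_on D psi \<and>
     closed {(x, t). x \<in> D \<and> psi x \<le> t}"

definition Fval :: "(real^'n \<Rightarrow> real) \<Rightarrow> (real^'n \<Rightarrow> real) \<Rightarrow> real^'n \<Rightarrow> real" where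
  "Fval f psi x = f x + psi x"

definition Fstar :: "(real^'n) set \<Rightarrow> (real^'n \<Rightarrow> real) \<Rightarrow> (real^'n \<Rightarrow> real) \<Rightarrow> real" where
  "Fstar D f psi = Inf (Fval f psi ` D)"

definition optset :: "(real^'n) set \<Rightarrow> (real^'n \<Rightarrow> real) \<Rightarrow> (real^'n \<Rightarrow> real) \<Rightarrow> (real^'n) set" where
  "optset D f psi = {x \<in> D. Fval f psi x = Fstar D f psi}"

definition projOmega :: "(real^'n) set \<Rightarrow> (real^'n \<Rightarrow> real) \<Rightarrow> (real^'n \<Rightarrow> real) \<Rightarrow> real^'n \<Rightarrow> real^'n" where
  "projOmega D f psi x = closest_point (optset D f psi) x"

text \<open>mu-optimal-set-strong convexity (trivial for x outside dom F, where F x = +infinity).\<close>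
definition opt_set_strongly_convex ::
  "(real^'n) set \<Rightarrow> (real^'n \<Rightarrow> real) \<Rightarrow> (real^'n \<Rightarrow> real) \<Rightarrow> real \<Rightarrow> bool" where
  "opt_set_strongly_convex D f psi mu \<longleftrightarrow>
     (\<forall>x\<in>D. \<forall>lam\<in>{0..1}.
        let p = projOmega D f psi x; z = lam *\<^sub>R x + (1 - lam) *\<^sub>R p in
        z \<in> D \<and>
        Fval f psi z \<le> lam * Fval f psi x + (1 - lam) * Fstar D f psi
                        - mu * lam * (1 - lam) / 2 * (norm (x - p))\<^sup>2)"

text \<open>The model Q^x_H(d) (finite exactly when x + d is in D), its infimum, and
  eta-inexactness (impossible when Q is unbounded below, i.e. Q^* = -infinity).\<close>
definition Qfun :: "(real^'n \<Rightarrow> real^'n) \<Rightarrow> (real^'n \<Rightarrow> real) \<Rightarrow> real^'n \<Rightarrow> real^'n^'n \<Rightarrow> real^'n \<Rightarrow> real" where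
  "Qfun g psi x H d = g x \<bullet> d + 1/2 * (d \<bullet> (H *v d)) + psi (x + d) - psi x"

definition Qvals :: "(real^'n) set \<Rightarrow> (real^'n \<Rightarrow> real^'n) \<Rightarrow> (real^'n \<Rightarrow> real) \<Rightarrow> real^'n \<Rightarrow> real^'n^'n \<Rightarrow> real set" where
  "Qvals D g psi x H = {Qfun g psi x H d | d. x + d \<in> D}"

definition Qstar :: "(real^'n) set \<Rightarrow> (real^'n \<Rightarrow> real^'n) \<Rightarrow> (real^'n \<Rightarrow> real) \<Rightarrow> real^'n \<Rightarrow> real^'n^'n \<Rightarrow> real" where
  "Qstar D g psi x H = Inf (Qvals D g psi x H)"

definition eta_inexact :: "(real^'n) set \<Rightarrow> (real^'n \<Rightarrow> real^'n) \<Rightarrow> (real^'n \<Rightarrow> real) \<Rightarrow> real \<Rightarrow>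
     real^'n \<Rightarrow> real^'n^'n \<Rightarrow> real^'n \<Rightarrow> bool" where
  "eta_inexact D g psi eta x H d \<longleftrightarrow>
     x + d \<in> D \<and> bdd_below (Qvals D g psi x H) \<and>
     Qfun g psi x H d \<le> (1 - eta) * Qstar D g psi x H"

definition accepted :: "(real^'n \<Rightarrow> real) \<Rightarrow> (real^'n \<Rightarrow> real^'n) \<Rightarrow> (real^'n \<Rightarrow> real) \<Rightarrow> real \<Rightarrow>
     real^'n \<Rightarrow> real^'n^'n \<Rightarrow> real^'n \<Rightarrow> bool" where
  "accepted f g psi gamma x H d \<longleftrightarrow>
     Fval f psi x - Fval f psi (x + d) \<ge> - gamma * Qfun g psi x H d \<and>
     - gamma * Qfun g psi x H d \<ge> 0"

text \<open>The matrix used in the j-th trial (j = 0 is the initial trial) of iteration k.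
  Variant 1: H^0_k / beta^j.  Variant 2: H^0_k for j = 0, H^0_k + beta^(-(j-1)) I for j >= 1.\<close>
definition Htrial :: "nat \<Rightarrow> real \<Rightarrow> real^'n^'n \<Rightarrow> nat \<Rightarrow> real^'n^'n" where
  "Htrial variant beta H0 j =
     (if variant = 1 then (1 / beta ^ j) *\<^sub>R H0
      else if j = 0 then H0 else H0 + (1 / beta ^ (j - 1)) *\<^sub>R mat 1)"

definition Mtilde1 :: "real \<Rightarrow> real \<Rightarrow> real \<Rightarrow> real \<Rightarrow> real \<Rightarrow> real \<Rightarrow> real" where
  "Mtilde1 L beta gamma m0 M0 eta =
     M0 * max 1 (L * (1 + sqrt eta) / (beta * (2 - gamma * (1 - sqrt eta)) * m0))"

definition Mtilde2 :: "real \<Rightarrow> real \<Rightarrow> real \<Rightarrow> real \<Rightarrow> real \<Rightarrow> real \<Rightarrow> real" where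
  "Mtilde2 L beta gamma m0 M0 eta =
     M0 + max 1 ((1 / beta) * (L * (1 + sqrt eta) / (2 - gamma * (1 - sqrt eta)) - m0))"

end

theory Submission
  imports Defs
begin
lemma deriv_line:
  fixes f :: "real^'n \<Rightarrow> real" and g :: "real^'n \<Rightarrow> real^'n"
  assumes grad: "\<And>z. (f has_derivative (\<lambda>h. g z \<bullet> h)) (at z)"
  shows "((\<lambda>t. f (x + t *\<^sub>R d)) has_real_derivative (g (x + t *\<^sub>R d) \<bullet> d)) (at t)"
proof -
  have l: "((\<lambda>t. x + t *\<^sub>R d) has_derivative (\<lambda>h. h *\<^sub>R d)) (at t)"
    by (auto intro!: derivative_eq_intros)
  have "((\<lambda>t. f (x + t *\<^sub>R d)) has_derivative (\<lambda>h. g (x + t *\<^sub>R d) \<bullet> (h *\<^sub>R d))) (at t)"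
    using has_derivative_compose[OF l grad] by (simp add: o_def)
  moreover have "(\<lambda>h. g (x + t *\<^sub>R d) \<bullet> (h *\<^sub>R d)) = (*) (g (x + t *\<^sub>R d) \<bullet> d)"
    by (auto simp: mult.commute)
  ultimately show ?thesis unfolding has_field_derivative_def by simp
qed

lemma descent:
  fixes f :: "real^'n \<Rightarrow> real" and g :: "real^'n \<Rightarrow> real^'n"
  assumes grad: "\<And>z. (f has_derivative (\<lambda>h. g z \<bullet> h)) (at z)"
    and Lip: "\<And>y z. norm (g y - g z) \<le> L * norm (y - z)"
  shows "f (x + d) \<le> f x + g x \<bullet> d + L / 2 * (norm d)\<^sup>2"
proof -
  define \<phi> where "\<phi> t = f (x + t *\<^sub>R d) - t * (g x \<bullet> d) - L / 2 * t\<^sup>2 * (norm d)\<^sup>2" for t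
  have D: "(\<phi> has_real_derivative (g (x + t *\<^sub>R d) \<bullet> d - g x \<bullet> d - L * t * (norm d)\<^sup>2)) (at t)" for t
    unfolding \<phi>_def
    by (auto intro!: derivative_eq_intros deriv_line[OF grad] simp: power2_eq_square)
  have N: "g (x + t *\<^sub>R d) \<bullet> d - g x \<bullet> d - L * t * (norm d)\<^sup>2 \<le> 0" if "0 \<le> t" for t
  proof -
    have "g (x + t *\<^sub>R d) \<bullet> d - g x \<bullet> d = (g (x + t *\<^sub>R d) - g x) \<bullet> d" by (simp add: inner_diff_left)
    also have "\<dots> \<le> norm (g (x + t *\<^sub>R d) - g x) * norm d" by (rule norm_cauchy_schwarz)
    also have "\<dots> \<le> L * norm (t *\<^sub>R d) * norm d"
      using Lip[of "x + t *\<^sub>R d" x] by (intro mult_right_mono) auto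
    also have "\<dots> = L * t * (norm d)\<^sup>2" using that by (simp add: power2_eq_square)
    finally show ?thesis by simp
  qed
  have "\<phi> 1 \<le> \<phi> 0"
  proof (rule DERIV_nonpos_imp_nonincreasing[of 0 1])
    fix t :: real assume "0 \<le> t" "t \<le> 1"
    then show "\<exists>y. (\<phi> has_real_derivative y) (at t) \<and> y \<le> 0" using D[of t] N[of t] by blast
  qed simp
  then show ?thesis unfolding \<phi>_def by simp
qed

lemma tangent:
  fixes f :: "real^'n \<Rightarrow> real" and g :: "real^'n \<Rightarrow> real^'n"
  assumes grad: "\<And>z. (f has_derivative (\<lambda>h. g z \<bullet> h)) (at z)"
    and fconv: "convex_on UNIV f"
  shows "f y - f x \<ge> g x \<bullet> (y - x)"
proof -
  define \<phi> where "\<phi> t = f (x + t *\<^sub>R (y - x))" for t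
  have c: "convex_on UNIV \<phi>"
  proof (rule convex_onI)
    fix u s t :: real assume u: "0 < u" "u < 1"
    have "x + ((1 - u) * s + u * t) *\<^sub>R (y - x) = (1 - u) *\<^sub>R (x + s *\<^sub>R (y - x)) + u *\<^sub>R (x + t *\<^sub>R (y - x))"
      by (simp add: algebra_simps)
    then show "\<phi> ((1 - u) *\<^sub>R s + u *\<^sub>R t) \<le> (1 - u) * \<phi> s + u * \<phi> t"
      unfolding \<phi>_def using convex_onD[OF fconv, of u] u by auto
  qed simp
  have "\<phi> 1 - \<phi> 0 \<ge> (g x \<bullet> (y - x)) * (1 - 0)"
    by (rule convex_on_imp_above_tangent[OF c]) (use deriv_line[OF grad, of x "y - x" 0] in \<open>auto simp: \<phi>_def[abs_def]\<close>)
  then show ?thesis by (simp add: \<phi>_def)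
qed

definition symf :: "real^'n^'n \<Rightarrow> bool" where
  "symf H \<longleftrightarrow> (\<forall>v w. v \<bullet> (H *v w) = w \<bullet> (H *v v))"

lemma symf_of_sym: "symmetric_mat H \<Longrightarrow> symf H"
  unfolding symf_def symmetric_mat_def
proof (intro allI)
  fix v w assume T: "transpose H = H"
  have "v \<bullet> (H *v w) = (v v* H) \<bullet> w" by (simp add: dot_lmul_matrix)
  also have "v v* H = H *v v" using vector_transpose_matrix[of v H] T by simp
  finally show "v \<bullet> (H *v w) = w \<bullet> (H *v v)" by (simp add: inner_commute)
qed

lemma symf_scale: "symf H \<Longrightarrow> symf (a *\<^sub>R H)"
  unfolding symf_def by (simp flip: scaleR_matrix_vector_assoc)

lemma symf_add_id: "symf H \<Longrightarrow> symf (H + a *\<^sub>R mat 1)"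
  unfolding symf_def
  by (simp add: matrix_vector_mult_add_rdistrib inner_add_right inner_commute flip: scaleR_matrix_vector_assoc)

lemma quad_scale: "(v::real^'n) \<bullet> ((a *\<^sub>R H) *v v) = a * (v \<bullet> (H *v v))"
  by (simp flip: scaleR_matrix_vector_assoc)

lemma quad_add_id: "(v::real^'n) \<bullet> ((H + a *\<^sub>R mat 1) *v v) = v \<bullet> (H *v v) + a * (norm v)\<^sup>2"
  by (simp add: matrix_vector_mult_add_rdistrib inner_add_right power2_norm_eq_inner flip: scaleR_matrix_vector_assoc)

lemma loewner_id: "loewner_le (a *\<^sub>R mat 1) H \<longleftrightarrow> (\<forall>v. a * (norm v)\<^sup>2 \<le> v \<bullet> (H *v v))"
  by (simp add: loewner_le_def power2_norm_eq_inner flip: scaleR_matrix_vector_assoc)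

lemma loewner_id2: "loewner_le H (a *\<^sub>R mat 1) \<longleftrightarrow> (\<forall>v. v \<bullet> (H *v v) \<le> a * (norm v)\<^sup>2)"
  by (simp add: loewner_le_def power2_norm_eq_inner flip: scaleR_matrix_vector_assoc)

lemma spec_norm_nonneg: "spec_norm H \<ge> 0"
  unfolding spec_norm_def by (rule onorm_pos_le) simp

lemma quad_le_spec: "v \<bullet> (H *v v) \<le> spec_norm H * (norm v)\<^sup>2"
proof -
  have "v \<bullet> (H *v v) \<le> norm v * norm (H *v v)"
    using norm_cauchy_schwarz by blast
  also have "\<dots> \<le> norm v * (spec_norm H * norm v)"
    unfolding spec_norm_def by (intro mult_left_mono onorm) auto
  finally show ?thesis by (simp add: power2_eq_square mult_ac)
qed

lemma spec_le:
  assumes S: "symf H" and lo: "\<And>v. a * (norm v)\<^sup>2 \<le> v \<bullet> (H *v v)"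
    and up: "\<And>v. v \<bullet> (H *v v) \<le> b * (norm v)\<^sup>2"
  shows "spec_norm H \<le> max \<bar>a\<bar> \<bar>b\<bar>"
proof -
  define M where "M = max \<bar>a\<bar> \<bar>b\<bar>"
  have Q: "\<bar>u \<bullet> (H *v u)\<bar> \<le> M * (norm u)\<^sup>2" for u
  proof -
    have "a * (norm u)\<^sup>2 \<ge> - M * (norm u)\<^sup>2"
      by (intro mult_right_mono) (auto simp: M_def)
    moreover have "b * (norm u)\<^sup>2 \<le> M * (norm u)\<^sup>2"
      by (intro mult_right_mono) (auto simp: M_def)
    ultimately show ?thesis using lo[of u] up[of u] by linarith
  qed
  have "norm (H *v v) \<le> M * norm v" for v
  proof (cases "H *v v = 0")
    case True then show ?thesis using Q[of 0] by (simp add: M_def)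
  next
    case False
    define w where "w = (norm v / norm (H *v v)) *\<^sub>R (H *v v)"
    have nH: "norm (H *v v) > 0" using False by simp
    have nw: "norm w = norm v" unfolding w_def using nH by simp
    have wH: "w \<bullet> (H *v v) = norm v * norm (H *v v)"
      unfolding w_def using nH by (simp add: power2_norm_eq_inner[symmetric] power2_eq_square)
    have pol: "(v + w) \<bullet> (H *v (v + w)) - (v - w) \<bullet> (H *v (v - w)) = 4 * (w \<bullet> (H *v v))"
      using S unfolding symf_def
      by (simp add: matrix_vector_right_distrib matrix_vector_mult_diff_distrib inner_add_left inner_add_right inner_diff_left inner_diff_right)
    have "4 * (norm v * norm (H *v v)) \<le> M * (norm (v + w))\<^sup>2 + M * (norm (v - w))\<^sup>2"
      using Q[of "v + w"] Q[of "v - w"] pol wH by linarith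
    also have "\<dots> = M * (2 * (norm v)\<^sup>2 + 2 * (norm w)\<^sup>2)"
      by (simp add: power2_norm_eq_inner inner_add_left inner_add_right inner_diff_left inner_diff_right inner_commute algebra_simps)
    also have "\<dots> = 4 * (norm v * (M * norm v))" using nw by (simp add: power2_eq_square algebra_simps)
    finally have "norm v * norm (H *v v) \<le> norm v * (M * norm v)" by simp
    moreover have "norm v > 0" using False by (auto)
    ultimately show ?thesis by simp
  qed
  then show ?thesis unfolding spec_norm_def M_def by (intro onorm_le) auto
qed

lemma Qfun0: "Qfun g psi x H 0 = 0" by (simp add: Qfun_def)

lemma Qstar_le:
  assumes "bdd_below (Qvals D g psi x H)" "x + d \<in> D"
  shows "Qstar D g psi x H \<le> Qfun g psi x H d"
  unfolding Qstar_def by (rule cInf_lower) (use assms in \<open>auto simp: Qvals_def\<close>)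

lemma Qstar_nonpos:
  assumes "bdd_below (Qvals D g psi x H)" "x \<in> D"
  shows "Qstar D g psi x H \<le> 0"
  using Qstar_le[OF assms(1), of 0] assms(2) by (simp add: Qfun0)

lemma key_accept:
  fixes f psi :: "real^'n \<Rightarrow> real" and g :: "real^'n \<Rightarrow> real^'n"
  assumes descent: "\<And>y. f (x + y) \<le> f x + g x \<bullet> y + L / 2 * (norm y)\<^sup>2"
    and cD: "convex D" and cpsi: "convex_on D psi" and xD: "x \<in> D"
    and inex: "eta_inexact D g psi eta x H d"
    and Hc: "\<And>v. c * (norm v)\<^sup>2 \<le> v \<bullet> (H *v v)"
    and cdef: "c = L * (1 + sqrt eta) / (2 - gamma * (1 - sqrt eta))"
    and eta: "0 \<le> eta" "eta < 1" and gamma: "0 < gamma" "gamma \<le> 1" and L: "L > 0"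
  shows "accepted f g psi gamma x H d"
proof -
  define s where "s = sqrt eta"
  have s: "0 \<le> s" "s < 1" using eta by (auto simp: s_def real_sqrt_lt_1_iff)
  have es: "eta = s\<^sup>2" using eta by (simp add: s_def)
  have cs: "c = L * (1 + s) / (2 - gamma * (1 - s))" using cdef by (simp add: s_def)
  have den: "2 - gamma * (1 - s) > 0"
  proof -
    have "gamma * (1 - s) \<le> 1 * 1" using s gamma by (intro mult_mono) auto
    then show ?thesis by simp
  qed
  have c: "c > 0" unfolding cs using L s den by (intro divide_pos_pos mult_pos_pos) auto
  define Q where "Q = Qfun g psi x H"
  define q where "q = Q d"
  define Qs where "Qs = Qstar D g psi x H"
  define A where "A = c * (norm d)\<^sup>2 / 2"
  have A: "A \<ge> 0" using c by (simp add: A_def)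
  have xd: "x + d \<in> D" and bb: "bdd_below (Qvals D g psi x H)" and qQs: "q \<le> (1 - eta) * Qs"
    using inex by (auto simp: eta_inexact_def q_def Q_def Qs_def)
  have Qs0: "Qs \<le> 0" unfolding Qs_def by (rule Qstar_nonpos[OF bb xD])
  have q0: "q \<le> 0" using qQs Qs0 eta by (smt (verit) mult_nonneg_nonpos)
  have Qt: "Qs \<le> t * q - t * (1 - t) * A" if t: "0 \<le> t" "t \<le> 1" for t
  proof -
    have mem: "x + t *\<^sub>R d = (1 - t) *\<^sub>R x + t *\<^sub>R (x + d)" by (simp add: algebra_simps)
    have mD: "x + t *\<^sub>R d \<in> D" unfolding mem using cD xD xd t by (simp add: convex_def)
    have ps: "psi (x + t *\<^sub>R d) \<le> (1 - t) * psi x + t * psi (x + d)"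
      unfolding mem using convex_onD[OF cpsi, of t x "x + d"] t xD xd by simp
    have quad: "(t *\<^sub>R d) \<bullet> (H *v (t *\<^sub>R d)) = t\<^sup>2 * (d \<bullet> (H *v d))"
      by (simp add: matrix_vector_mult_scaleR power2_eq_square)
    have cq: "t * (1 - t) * (c * (norm d)\<^sup>2) \<le> t * (1 - t) * (d \<bullet> (H *v d))"
      using t Hc[of d] by (intro mult_left_mono) auto
    have "Qs \<le> Q (t *\<^sub>R d)" unfolding Qs_def Q_def by (rule Qstar_le[OF bb mD])
    also have "Q (t *\<^sub>R d) = t * (g x \<bullet> d) + 1/2 * (t\<^sup>2 * (d \<bullet> (H *v d))) + psi (x + t *\<^sub>R d) - psi x"
      unfolding Q_def Qfun_def quad by simp
    also have "\<dots> \<le> t * q - t * (1 - t) * A"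
    proof -
      have e1: "t\<^sup>2 * (d \<bullet> (H *v d)) = t * (d \<bullet> (H *v d)) - t * (1 - t) * (d \<bullet> (H *v d))"
        by (simp add: power2_eq_square algebra_simps)
      have e2: "t * q - t * (1 - t) * A = t * (g x \<bullet> d) + 1/2 * (t * (d \<bullet> (H *v d))) + t * psi (x + d) - t * psi x
                  - 1/2 * (t * (1 - t) * (c * (norm d)\<^sup>2))"
        unfolding q_def Q_def Qfun_def A_def by (simp add: algebra_simps add_divide_distrib diff_divide_distrib)
      have e3: "(1 - t) * psi x = psi x - t * psi x" by (simp add: algebra_simps)
      show ?thesis unfolding e1 e2 using ps cq e3 by argo
    qed
    finally show ?thesis .
  qed
  have lb: "- q \<ge> (1 - s) / (1 + s) * A"
  proof (cases "s = 0")
    case True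
    have e0: "eta = 0" using es True by simp
    show ?thesis
    proof (rule ccontr)
      assume "\<not> ?thesis"
      then have qA: "q > - A" using True by simp
      then have Ap: "A > 0" using q0 by linarith
      define t where "t = (1 + (- q) / A) / 2"
      have t: "0 \<le> t" "t < 1" using q0 qA Ap by (auto simp: t_def field_simps)
      have "q \<le> t * q - t * (1 - t) * A" using Qt[of t] t qQs e0 by simp
      then have "(1 - t) * q \<le> (1 - t) * (- t * A)" by (simp add: algebra_simps)
      then have "q \<le> - t * A" using t mult_le_cancel_left_pos[of "1 - t" q "- t * A"] by linarith
      moreover have "- t * A = (q - A) / 2" using Ap by (simp add: t_def field_simps)
      moreover note qA
      ultimately show False by simp
    qed
  next
    case False
    then have sp: "s > 0" using s by simp
    define t where "t = 1 / (1 + s)"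
    have t: "0 \<le> t" "t \<le> 1" using s by (auto simp: t_def)
    have "q \<le> (1 - eta) * (t * q - t * (1 - t) * A)"
      using qQs Qt[OF t] eta by (smt (verit) mult_left_mono)
    also have "\<dots> = (1 - s) * q - (1 - s) * s / (1 + s) * A"
    proof -
      have h1: "(1 - eta) * t = 1 - s" unfolding es t_def using s
        by (simp add: field_simps power2_eq_square)
      have h2: "1 - t = s / (1 + s)" unfolding t_def using s by (simp add: field_simps)
      have "(1 - eta) * (t * q - t * (1 - t) * A) = ((1 - eta) * t) * q - ((1 - eta) * t) * (1 - t) * A"
        by (simp add: algebra_simps)
      then show ?thesis unfolding h1 h2 by simp
    qed
    finally have "s * q \<le> - (s * ((1 - s) / (1 + s) * A))" by (simp add: algebra_simps)
    then have "s * q \<le> s * (- ((1 - s) / (1 + s) * A))" by simp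
    then have "q \<le> - ((1 - s) / (1 + s) * A)" using sp mult_le_cancel_left_pos[of s q "- ((1 - s) / (1 + s) * A)"] by linarith
    then show ?thesis by linarith
  qed
  have dec: "Fval f psi x - Fval f psi (x + d) \<ge> - q + (c - L) / 2 * (norm d)\<^sup>2"
  proof -
    have "(c - L) / 2 * (norm d)\<^sup>2 = 1/2 * (c * (norm d)\<^sup>2) - L / 2 * (norm d)\<^sup>2" by (simp add: field_simps)
    then show ?thesis using descent[of d] Hc[of d] unfolding Fval_def q_def Q_def Qfun_def by argo
  qed
  have ident: "(1 - gamma) * ((1 - s) / (1 + s) * A) = (L - c) / 2 * (norm d)\<^sup>2"
  proof -
    define E where "E = 2 - gamma * (1 - s)"
    define R where "R = (norm d)\<^sup>2"
    have E: "E > 0" using den by (simp add: E_def)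
    have cE: "c * E = L * (1 + s)" unfolding cs E_def using den by simp
    have k2: "(L - c) * E = L * (1 - gamma) * (1 - s)"
    proof -
      have "(L - c) * E = L * E - c * E" by (simp add: algebra_simps)
      also have "\<dots> = L * E - L * (1 + s)" using cE by simp
      also have "\<dots> = L * (1 - gamma) * (1 - s)" unfolding E_def by (simp add: algebra_simps)
      finally show ?thesis .
    qed
    have k1: "(1 - s) / (1 + s) * A * E = (1 - s) * L * R / 2"
    proof -
      have "(1 - s) / (1 + s) * A * E = (1 - s) / (1 + s) * (c * E) * R / 2"
        unfolding A_def R_def by simp
      also have "\<dots> = (1 - s) * L * R / 2" using s unfolding cE by (simp add: field_simps)
      finally show ?thesis .
    qed
    have "(1 - gamma) * ((1 - s) / (1 + s) * A) * E = (L - c) / 2 * R * E"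
    proof -
      have "(1 - gamma) * ((1 - s) / (1 + s) * A) * E = (1 - gamma) * ((1 - s) / (1 + s) * A * E)" by simp
      also have "\<dots> = (1 - gamma) * ((1 - s) * L * R / 2)" unfolding k1 ..
      also have "\<dots> = ((L - c) * E) * R / 2" unfolding k2 by simp
      also have "\<dots> = (L - c) / 2 * R * E" by simp
      finally show ?thesis .
    qed
    then show ?thesis using E unfolding R_def by (metis mult_right_cancel order_less_irrefl)
  qed
  have "(1 - gamma) * (- q) \<ge> (1 - gamma) * ((1 - s) / (1 + s) * A)"
    using lb gamma by (intro mult_left_mono) auto
  moreover have "(c - L) / 2 * (norm d)\<^sup>2 = - ((L - c) / 2 * (norm d)\<^sup>2)" by (simp add: field_simps)
  moreover have "(1 - gamma) * (- q) = - q + gamma * q" by (simp add: algebra_simps)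
  ultimately have "- q + (c - L) / 2 * (norm d)\<^sup>2 \<ge> - gamma * q" using ident by argo
  with dec have "Fval f psi x - Fval f psi (x + d) \<ge> - gamma * q" by linarith
  moreover have "- gamma * q \<ge> 0" using q0 gamma by (simp add: mult_le_0_iff)
  ultimately show ?thesis unfolding accepted_def q_def Q_def by simp
qed

lemma model_bound:
  fixes f psi :: "real^'n \<Rightarrow> real" and g :: "real^'n \<Rightarrow> real^'n"
  assumes tang: "\<And>y. f y - f x \<ge> g x \<bullet> (y - x)"
    and bb: "bdd_below (Qvals D g psi x H)"
    and zD: "(1 - lam) *\<^sub>R x + lam *\<^sub>R p \<in> D"
    and Fz: "Fval f psi ((1 - lam) *\<^sub>R x + lam *\<^sub>R p) \<le> (1 - lam) * Fval f psi x + lam * Fs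
               - mu * lam * (1 - lam) / 2 * (norm (x - p))\<^sup>2"
  shows "Qstar D g psi x H \<le> - lam * (Fval f psi x - Fs) - mu * lam * (1 - lam) / 2 * (norm (x - p))\<^sup>2
            + lam\<^sup>2 / 2 * ((x - p) \<bullet> (H *v (x - p)))"
proof -
  define z where "z = (1 - lam) *\<^sub>R x + lam *\<^sub>R p"
  define d where "d = lam *\<^sub>R (p - x)"
  have xd: "x + d = z" unfolding d_def z_def by (simp add: algebra_simps)
  have dz: "z - x = d" using xd by (simp add: algebra_simps)
  have quad: "d \<bullet> (H *v d) = lam\<^sup>2 * ((x - p) \<bullet> (H *v (x - p)))"
  proof -
    have e: "d = (- lam) *\<^sub>R (x - p)" unfolding d_def by (simp add: algebra_simps)
    have "H *v d = (- lam) *\<^sub>R (H *v (x - p))" unfolding e by (rule matrix_vector_mult_scaleR)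
    then show ?thesis by (simp add: e power2_eq_square)
  qed
  have "Qstar D g psi x H \<le> Qfun g psi x H d"
    by (rule Qstar_le[OF bb]) (use zD xd z_def in simp)
  also have "\<dots> = g x \<bullet> d + 1/2 * (lam\<^sup>2 * ((x - p) \<bullet> (H *v (x - p)))) + psi z - psi x"
    unfolding Qfun_def quad xd ..
  finally have 1: "Qstar D g psi x H \<le> g x \<bullet> d + 1/2 * (lam\<^sup>2 * ((x - p) \<bullet> (H *v (x - p)))) + psi z - psi x" .
  have 2: "g x \<bullet> d \<le> f z - f x" using tang[of z] dz by simp
  have 3: "(1 - lam) * Fval f psi x = Fval f psi x - lam * Fval f psi x" by (simp add: algebra_simps)
  have 4: "- lam * (Fval f psi x - Fs) = lam * Fs - lam * Fval f psi x" by (simp add: algebra_simps)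
  show ?thesis using 1 2 3 4 Fz unfolding z_def[symmetric] Fval_def by argo
qed

lemma mono_rate:
  fixes a b mu gamma eta :: real
  assumes "0 \<le> a" "a \<le> b" "mu > 0" "gamma \<ge> 0" "eta \<le> 1"
  shows "1 - gamma * (mu * (1 - eta) / (mu + a)) \<le> 1 - gamma * (mu * (1 - eta) / (mu + b))"
proof -
  have "mu * (1 - eta) / (mu + b) \<le> mu * (1 - eta) / (mu + a)"
    using assms by (intro divide_left_mono mult_nonneg_nonneg mult_pos_pos) auto
  then have "gamma * (mu * (1 - eta) / (mu + b)) \<le> gamma * (mu * (1 - eta) / (mu + a))"
    using assms(4) by (rule mult_left_mono)
  then show ?thesis by linarith
qed


lemma v2_arith:
  fixes c beta m0 M0 s :: real
  assumes c: "c > 0" and b: "0 < beta" "beta < 1" and M0: "M0 > 0" and m: "m0 \<le> M0"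
    and s: "0 \<le> s" "s \<le> max 1 ((1 / beta) * (c - m0))"
  shows "max \<bar>m0 + s\<bar> \<bar>M0 + s\<bar> \<le> M0 + max 1 ((1 / beta) * (c - m0))"
proof -
  have neg: "- m0 \<le> M0 + max 1 ((1 / beta) * (c - m0))"
  proof (cases "m0 \<ge> 0")
    case True then show ?thesis using M0 by (smt (verit) max.cobounded1)
  next
    case False
    have "1 * (c - m0) \<le> (1 / beta) * (c - m0)"
      using False c b by (intro mult_right_mono) auto
    then show ?thesis using M0 c by (smt (verit) max.cobounded2)
  qed
  show ?thesis using neg s M0 m by (smt (verit))
qed

lemma v1_arith:
  fixes c beta m0 M0 a :: real
  assumes "0 < m0" "m0 \<le> M0" "0 < a"
  shows "max \<bar>a * m0\<bar> \<bar>a * M0\<bar> = a * M0"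
  using assms by (simp add: abs_of_pos mult_left_mono)

lemma lt_from_ex:
  fixes H :: "real^'n^'n"
  assumes "\<not> (\<forall>v. c * (norm v)\<^sup>2 \<le> v \<bullet> (H *v v))" "\<And>v. a * (norm v)\<^sup>2 \<le> v \<bullet> (H *v v)"
  shows "a < c"
proof (rule ccontr)
  assume "\<not> a < c"
  then have "\<And>v. c * (norm v)\<^sup>2 \<le> a * (norm v)\<^sup>2" by (intro mult_right_mono) auto
  then show False using assms by (meson order_trans)
qed

theorem theorem3:
  fixes f psi :: "real^'n \<Rightarrow> real" and g :: "real^'n \<Rightarrow> real^'n"
    and D :: "(real^'n) set"
    and L mu beta gamma eta m0 M0 :: real and variant :: nat
    and x :: "nat \<Rightarrow> real^'n" and H0 :: "nat \<Rightarrow> real^'n^'n"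
    and t :: "nat \<Rightarrow> nat" and dtr :: "nat \<Rightarrow> nat \<Rightarrow> real^'n"
  assumes grad: "\<And>z. (f has_derivative (\<lambda>h. g z \<bullet> h)) (at z)"
    and Lpos: "L > 0"
    and Lip: "\<And>y z. norm (g y - g z) \<le> L * norm (y - z)"
    and psi: "convex_proper_closed D psi"
    and bdd: "bdd_below (Fval f psi ` D)"
    and Omega_ne: "optset D f psi \<noteq> {}"
    and fconv: "convex_on UNIV f"
    and mu: "mu > 0" and osc: "opt_set_strongly_convex D f psi mu"
    and beta: "0 < beta" "beta < 1"
    and gamma: "0 < gamma" "gamma \<le> 1"
    and eta: "0 \<le> eta" "eta < 1"
    and variant: "variant \<in> {1, 2}"
    and H0_sym: "\<And>k. symmetric_mat (H0 k)"
    and H0_lower: "\<And>k. loewner_le (m0 *\<^sub>R mat 1) (H0 k)"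
    and H0_upper: "\<And>k. loewner_le (H0 k) (M0 *\<^sub>R mat 1)"
    and M0: "M0 > 0" and m0M0: "m0 \<le> M0"
    and m0_v1: "variant = 1 \<Longrightarrow> m0 > 0"
    and x0: "x 0 \<in> D"
    and inexact: "\<And>k j. j \<le> t k \<Longrightarrow>
        eta_inexact D g psi eta (x k) (Htrial variant beta (H0 k) j) (dtr k j)"
    and rejected: "\<And>k j. j < t k \<Longrightarrow>
        \<not> accepted f g psi gamma (x k) (Htrial variant beta (H0 k) j) (dtr k j)"
    and acc: "\<And>k. accepted f g psi gamma (x k) (Htrial variant beta (H0 k) (t k)) (dtr k (t k))"
    and step: "\<And>k. x (Suc k) = x k + dtr k (t k)"
  shows
    "(\<forall>k. Fval f psi (x (Suc k)) - Fstar D f psi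
          \<le> (1 - gamma * (mu * (1 - eta)
                 / (mu + spec_norm (Htrial variant beta (H0 k) (t k)))))
             * (Fval f psi (x k) - Fstar D f psi))
    \<and>
    (\<forall>k. variant = 1 \<longrightarrow>
          1 - gamma * (mu * (1 - eta) / (mu + spec_norm (Htrial variant beta (H0 k) (t k))))
          \<le> 1 - gamma * (mu * (1 - eta) / (mu + Mtilde1 L beta gamma m0 M0 eta)))
    \<and>
    (\<forall>k. variant = 2 \<longrightarrow>
          1 - gamma * (mu * (1 - eta) / (mu + spec_norm (Htrial variant beta (H0 k) (t k))))
          \<le> 1 - gamma * (mu * (1 - eta) / (mu + Mtilde2 L beta gamma m0 M0 eta)))
    \<and>
    (\<forall>k. (let Hk = Htrial variant beta (H0 k) (t k);
              r = x k - projOmega D f psi (x k) in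
          loewner_le 0 Hk \<and> Fval f psi (x k) - Fstar D f psi \<ge> r \<bullet> (Hk *v r) \<longrightarrow>
          Fval f psi (x (Suc k)) - Fstar D f psi
            \<le> (1 - (1 - eta) * gamma / 2) * (Fval f psi (x k) - Fstar D f psi)))"
proof -
  define Fs where "Fs = Fstar D f psi"
  define H where "H k = Htrial variant beta (H0 k) (t k)" for k
  define p where "p k = projOmega D f psi (x k)" for k
  define c where "c = L * (1 + sqrt eta) / (2 - gamma * (1 - sqrt eta))"
  have cD: "convex D" and cpsi: "convex_on D psi" using psi by (auto simp: convex_proper_closed_def)
  have xD: "x k \<in> D" for k
  proof (induction k)
    case 0 show ?case by (rule x0)
  next
    case (Suc k) show ?case using inexact[of "t k" k] step[of k] by (simp add: eta_inexact_def)
  qed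
  have Fge: "Fval f psi (x k) \<ge> Fs" for k
    unfolding Fs_def Fstar_def by (rule cInf_lower) (use xD bdd in auto)
  have tang: "\<And>y z. f y - f z \<ge> g z \<bullet> (y - z)" by (rule tangent[OF grad fconv])
  have desc: "\<And>z y. f (z + y) \<le> f z + g z \<bullet> y + L / 2 * (norm y)\<^sup>2" by (rule descent[OF grad Lip])
  have inexk: "eta_inexact D g psi eta (x k) (H k) (dtr k (t k))" for k
    unfolding H_def by (rule inexact) simp
  have bbk: "bdd_below (Qvals D g psi (x k) (H k))" for k using inexk[of k] by (simp add: eta_inexact_def)
  have prog: "Fval f psi (x (Suc k)) - Fs \<le> (Fval f psi (x k) - Fs) + gamma * (1 - eta) * Qstar D g psi (x k) (H k)" for k
  proof -
    have a: "Fval f psi (x k) - Fval f psi (x k + dtr k (t k)) \<ge> - gamma * Qfun g psi (x k) (H k) (dtr k (t k))"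
      using acc[of k] unfolding H_def accepted_def by simp
    have q: "Qfun g psi (x k) (H k) (dtr k (t k)) \<le> (1 - eta) * Qstar D g psi (x k) (H k)"
      using inexk[of k] by (simp add: eta_inexact_def)
    have "gamma * Qfun g psi (x k) (H k) (dtr k (t k)) \<le> gamma * ((1 - eta) * Qstar D g psi (x k) (H k))"
      using q gamma by (intro mult_left_mono) auto
    then show ?thesis using a step[of k] by (simp add: algebra_simps)
  qed
  have QB: "Qstar D g psi (x k) (H k) \<le> - lam * (Fval f psi (x k) - Fs) - mu * lam * (1 - lam) / 2 * (norm (x k - p k))\<^sup>2
            + lam\<^sup>2 / 2 * ((x k - p k) \<bullet> (H k *v (x k - p k)))"
    if lam: "0 \<le> lam" "lam \<le> 1" for k lam
  proof -
    have l1: "1 - lam \<in> {0..1}" using lam by simp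
    note o = bspec[OF bspec[OF osc[unfolded opt_set_strongly_convex_def] xD[of k]] l1]
    have zD: "(1 - lam) *\<^sub>R x k + lam *\<^sub>R p k \<in> D"
      and Fz: "Fval f psi ((1 - lam) *\<^sub>R x k + lam *\<^sub>R p k) \<le> (1 - lam) * Fval f psi (x k) + lam * Fs
               - mu * lam * (1 - lam) / 2 * (norm (x k - p k))\<^sup>2"
      using o unfolding Let_def p_def Fs_def by (simp_all add: mult_ac)
    show ?thesis by (rule model_bound[OF tang bbk zD Fz])
  qed
  have part1: "Fval f psi (x (Suc k)) - Fs
          \<le> (1 - gamma * (mu * (1 - eta) / (mu + spec_norm (H k)))) * (Fval f psi (x k) - Fs)" for k
  proof -
    define sn where "sn = spec_norm (H k)"
    define lam where "lam = mu / (mu + sn)"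
    define \<Delta> where "\<Delta> = Fval f psi (x k) - Fs"
    define R where "R = (norm (x k - p k))\<^sup>2"
    have sn: "sn \<ge> 0" unfolding sn_def by (rule spec_norm_nonneg)
    have lam: "0 \<le> lam" "lam \<le> 1" using sn mu by (auto simp: lam_def)
    have Rq: "(x k - p k) \<bullet> (H k *v (x k - p k)) \<le> sn * R" unfolding sn_def R_def by (rule quad_le_spec)
    have ls: "lam * sn = mu * (1 - lam)" using sn mu by (simp add: lam_def field_simps)
    have "lam\<^sup>2 / 2 * ((x k - p k) \<bullet> (H k *v (x k - p k))) \<le> lam\<^sup>2 / 2 * (sn * R)"
      using Rq by (intro mult_left_mono) auto
    also have "\<dots> = mu * lam * (1 - lam) / 2 * R"
    proof -
      have "lam\<^sup>2 / 2 * (sn * R) = lam * (lam * sn) * R / 2" by (simp add: power2_eq_square)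
      also have "\<dots> = mu * lam * (1 - lam) / 2 * R" unfolding ls by simp
      finally show ?thesis .
    qed
    finally have "Qstar D g psi (x k) (H k) \<le> - lam * \<Delta>"
      using QB[OF lam, of k] unfolding \<Delta>_def R_def by linarith
    then have "gamma * (1 - eta) * Qstar D g psi (x k) (H k) \<le> gamma * (1 - eta) * (- lam * \<Delta>)"
      using gamma eta by (intro mult_left_mono) auto
    moreover have "(1 - gamma * (mu * (1 - eta) / (mu + sn))) * \<Delta> = \<Delta> + gamma * (1 - eta) * (- lam * \<Delta>)"
      by (simp add: lam_def algebra_simps)
    ultimately show ?thesis using prog[of k] unfolding sn_def \<Delta>_def by linarith
  qed
  have part4: "Fval f psi (x (Suc k)) - Fs \<le> (1 - (1 - eta) * gamma / 2) * (Fval f psi (x k) - Fs)"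
    if h: "Fval f psi (x k) - Fs \<ge> (x k - p k) \<bullet> (H k *v (x k - p k))" for k
  proof -
    define \<Delta> where "\<Delta> = Fval f psi (x k) - Fs"
    have "Qstar D g psi (x k) (H k) \<le> - \<Delta> / 2"
      using QB[of 1 k] h unfolding \<Delta>_def by simp
    then have "gamma * (1 - eta) * Qstar D g psi (x k) (H k) \<le> gamma * (1 - eta) * (- \<Delta> / 2)"
      using gamma eta by (intro mult_left_mono) auto
    moreover have "(1 - (1 - eta) * gamma / 2) * \<Delta> = \<Delta> + gamma * (1 - eta) * (- \<Delta> / 2)"
      by (simp add: algebra_simps)
    ultimately show ?thesis using prog[of k] unfolding \<Delta>_def by linarith
  qed
  have den: "2 - gamma * (1 - sqrt eta) > 0"
  proof -
    have s: "0 \<le> sqrt eta" "sqrt eta < 1" using eta by (auto simp: real_sqrt_lt_1_iff)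
    have "gamma * (1 - sqrt eta) \<le> 1 * 1" using s gamma by (intro mult_mono) auto
    then show ?thesis by simp
  qed
  have sq0: "0 \<le> sqrt eta" using eta by simp
  have sq1: "1 + sqrt eta > 0" using sq0 by linarith
  have c: "c > 0" unfolding c_def by (intro divide_pos_pos mult_pos_pos Lpos sq1 den)
  have rej: "\<not> (\<forall>v. c * (norm v)\<^sup>2 \<le> v \<bullet> (Htrial variant beta (H0 k) j *v v))" if j: "j < t k" for k j
  proof
    assume hv: "\<forall>v. c * (norm v)\<^sup>2 \<le> v \<bullet> (Htrial variant beta (H0 k) j *v v)"
    have "accepted f g psi gamma (x k) (Htrial variant beta (H0 k) j) (dtr k j)"
      by (rule key_accept[OF desc[of "x k"] cD cpsi xD[of k] inexact[of j k] _ c_def eta(1) eta(2) gamma(1) gamma(2) Lpos])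
         (use j hv in auto)
    then show False using rejected[OF j] by simp
  qed
  have H0lo: "m0 * (norm v)\<^sup>2 \<le> v \<bullet> (H0 k *v v)" for k v using H0_lower[of k] by (simp add: loewner_id)
  have H0up: "v \<bullet> (H0 k *v v) \<le> M0 * (norm v)\<^sup>2" for k v using H0_upper[of k] by (simp add: loewner_id2)
  have part2: "spec_norm (H k) \<le> Mtilde1 L beta gamma m0 M0 eta" if v1: "variant = 1" for k
  proof -
    have m0: "m0 > 0" using m0_v1 v1 .
    have Ht: "Htrial variant beta (H0 k) j = (1 / beta ^ j) *\<^sub>R H0 k" for j using v1 by (simp add: Htrial_def)
    have scl: "(a * m0) * (norm v)\<^sup>2 \<le> v \<bullet> ((a *\<^sub>R H0 k) *v v)" if "a \<ge> 0" for a v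
      unfolding quad_scale using mult_left_mono[OF H0lo[of v k] that] by (simp add: mult_ac)
    have scu: "v \<bullet> ((a *\<^sub>R H0 k) *v v) \<le> (a * M0) * (norm v)\<^sup>2" if "a \<ge> 0" for a v
      unfolding quad_scale using mult_left_mono[OF H0up[of v k] that] by (simp add: mult_ac)
    define a where "a = 1 / beta ^ t k"
    have a: "a > 0" using beta by (simp add: a_def)
    have "spec_norm (H k) \<le> max \<bar>a * m0\<bar> \<bar>a * M0\<bar>"
      unfolding H_def Ht a_def[symmetric]
      by (rule spec_le[OF symf_scale[OF symf_of_sym[OF H0_sym]]]) (use scl scu a in auto)
    also have "\<dots> = a * M0" using v1_arith[OF m0 m0M0 a] .
    also have "\<dots> \<le> Mtilde1 L beta gamma m0 M0 eta"
    proof -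
      have Mt: "Mtilde1 L beta gamma m0 M0 eta = M0 * max 1 (c / (beta * m0))"
        unfolding Mtilde1_def c_def by (simp add: mult_ac)
      show ?thesis
      proof (cases "t k")
        case 0
        then show ?thesis unfolding Mt a_def using M0 by (simp add: mult_left_mono)
      next
        case (Suc i)
        have "m0 * (1 / beta ^ i) < c"
          by (rule lt_from_ex[OF rej[of i k]]) (use Suc scl[of "1 / beta ^ i"] beta Ht in \<open>auto simp: mult_ac\<close>)
        then have "m0 / beta ^ i \<le> c" by simp
        have "a * M0 = M0 / (beta * m0) * (m0 / beta ^ i)" unfolding a_def Suc using m0 beta by (simp add: field_simps)
        also have "\<dots> \<le> M0 / (beta * m0) * c"
          using \<open>m0 / beta ^ i \<le> c\<close> M0 m0 beta by (intro mult_left_mono) auto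
        also have "\<dots> = M0 * (c / (beta * m0))" by simp
        also have "\<dots> \<le> M0 * max 1 (c / (beta * m0))" using M0 by (intro mult_left_mono) auto
        finally show ?thesis unfolding Mt .
      qed
    qed
    finally show ?thesis .
  qed
  have part3: "spec_norm (H k) \<le> Mtilde2 L beta gamma m0 M0 eta" if v2: "variant = 2" for k
  proof -
    have Mt: "Mtilde2 L beta gamma m0 M0 eta = M0 + max 1 ((1 / beta) * (c - m0))"
      unfolding Mtilde2_def c_def by simp
    have Ht: "Htrial variant beta (H0 k) (Suc j) = H0 k + (1 / beta ^ j) *\<^sub>R mat 1" for j
      using v2 by (simp add: Htrial_def)
    have adl: "(m0 + a) * (norm v)\<^sup>2 \<le> v \<bullet> ((H0 k + a *\<^sub>R mat 1) *v v)" for a v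
      unfolding quad_add_id using H0lo[of v k] by (simp add: algebra_simps)
    have adu: "v \<bullet> ((H0 k + a *\<^sub>R mat 1) *v v) \<le> (M0 + a) * (norm v)\<^sup>2" for a v
      unfolding quad_add_id using H0up[of v k] by (simp add: algebra_simps)
    show ?thesis
    proof (cases "t k")
      case 0
      then have "H k = H0 k" using v2 by (simp add: H_def Htrial_def)
      then have "spec_norm (H k) \<le> max \<bar>m0\<bar> \<bar>M0\<bar>"
        using spec_le[OF symf_of_sym[OF H0_sym] H0lo H0up] by simp
      also have "\<dots> \<le> Mtilde2 L beta gamma m0 M0 eta"
        unfolding Mt using v2_arith[OF c beta(1) beta(2) M0 m0M0, of 0] by simp
      finally show ?thesis .
    next
      case (Suc i)
      define s where "s = 1 / beta ^ i"
      have s0: "s \<ge> 0" using beta by (simp add: s_def)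
      have sb: "s \<le> max 1 ((1 / beta) * (c - m0))"
      proof (cases i)
        case 0 then show ?thesis by (simp add: s_def)
      next
        case (Suc i')
        have "m0 + 1 / beta ^ i' < c"
          by (rule lt_from_ex[OF rej[of i k]]) (use \<open>t k = Suc i\<close> Suc adl Ht in auto)
        then have "s \<le> (1 / beta) * (c - m0)" unfolding s_def Suc using beta
          by (simp add: field_simps)
        then show ?thesis by simp
      qed
      have "H k = H0 k + s *\<^sub>R mat 1" using Suc Ht by (simp add: H_def s_def)
      then have "spec_norm (H k) \<le> max \<bar>m0 + s\<bar> \<bar>M0 + s\<bar>"
        using spec_le[OF symf_add_id[OF symf_of_sym[OF H0_sym]] adl adu] by simp
      also have "\<dots> \<le> Mtilde2 L beta gamma m0 M0 eta"
        unfolding Mt using v2_arith[OF c beta(1) beta(2) M0 m0M0 s0 sb] .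
      finally show ?thesis .
    qed
  qed
  show ?thesis
    unfolding Fs_def[symmetric] H_def[symmetric] Let_def p_def[symmetric]
  proof (intro conjI allI impI)
    fix k show "Fval f psi (x (Suc k)) - Fs \<le> (1 - gamma * (mu * (1 - eta) / (mu + spec_norm (H k)))) * (Fval f psi (x k) - Fs)"
      by (rule part1)
  next
    fix k assume "variant = 1"
    then show "1 - gamma * (mu * (1 - eta) / (mu + spec_norm (H k)))
          \<le> 1 - gamma * (mu * (1 - eta) / (mu + Mtilde1 L beta gamma m0 M0 eta))"
      by (rule mono_rate[OF spec_norm_nonneg part2 mu]) (use gamma eta \<open>variant = 1\<close> in auto)
  next
    fix k assume "variant = 2"
    then show "1 - gamma * (mu * (1 - eta) / (mu + spec_norm (H k)))
          \<le> 1 - gamma * (mu * (1 - eta) / (mu + Mtilde2 L beta gamma m0 M0 eta))"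
      by (rule mono_rate[OF spec_norm_nonneg part3 mu]) (use gamma eta \<open>variant = 2\<close> in auto)
  next
    fix k assume "loewner_le 0 (H k) \<and> (x k - p k) \<bullet> (H k *v (x k - p k)) \<le> Fval f psi (x k) - Fs"
    then show "Fval f psi (x (Suc k)) - Fs \<le> (1 - (1 - eta) * gamma / 2) * (Fval f psi (x k) - Fs)"
      using part4 by blast
  qed
qed
end
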